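(* For every $n\ge1$ there exists a surjective open polyhedral map $(0,1)^n\to[0,1]^n$.
   Context: A polyhedron is a finite union of convex hulls of finite subsets of some $\mathbb R^d$; an open subpolyhedron of a polyhedron $P$ is $P\setminus R$ with $R\subseteq P$ a polyhedron, and $\mathrm{Sub}_o P$ denotes the set of these. The cube $[0,1]^n$ is equipped with the basis $\mathrm{Sub}_o[0,1]^n$, and $(0,1)^n$ (an open subpolyhedron of $[0,1]^n$) is equipped with the basis $\mathrm{Sub}_o(0,1)^n:=\{O\cap(0,1)^n: O\in\mathrm{Sub}_o[0,1]^n\}$. A map $g\colon(0,1)^n\to[0,1]^n$ is polyhedral if $g^{-1}[O]\in\mathrm{Sub}_o(0,1)^n$ for every $O\in\mathrm{Sub}_o[0,1]^n$, and open if $g[U]\in\mathrm{Sub}_o[0,1]^n$ for every $U\in\mathrm{Sub}_o(0,1)^n$. *)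

theory Defs
  imports "HOL-Analysis.Analysis"
begin

definition polyhedron :: "'a::euclidean_space set \<Rightarrow> bool" where
  "polyhedron P \<longleftrightarrow>
     (\<exists>F. finite F \<and> (\<forall>S\<in>F. finite S) \<and> P = \<Union> ((\<lambda>S. convex hull S) ` F))"

definition Sub_o :: "'a::euclidean_space set \<Rightarrow> 'a set set" where
  "Sub_o P = {P - R | R. R \<subseteq> P \<and> polyhedron R}"

abbreviation unit_cube :: "(real^'n) set" where
  "unit_cube \<equiv> cbox 0 1"

abbreviation open_unit_cube :: "(real^'n) set" where
  "open_unit_cube \<equiv> box 0 1"

definition Sub_o_open_cube :: "(real^'n) set set" where
  "Sub_o_open_cube = {V \<inter> open_unit_cube | V. V \<in> Sub_o unit_cube}"

definition polyhedral_map :: "(real^'n \<Rightarrow> real^'n) \<Rightarrow> bool" where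
  "polyhedral_map g \<longleftrightarrow>
     (\<forall>V\<in>Sub_o unit_cube. {x \<in> open_unit_cube. g x \<in> V} \<in> Sub_o_open_cube)"

definition open_polyhedral_map :: "(real^'n \<Rightarrow> real^'n) \<Rightarrow> bool" where
  "open_polyhedral_map g \<longleftrightarrow>
     (\<forall>U\<in>Sub_o_open_cube. g ` U \<in> Sub_o unit_cube)"

end

theory Submission
  imports Defs
begin


definition sat :: "'a::real_inner \<Rightarrow> ('a \<times> real \<times> bool) \<Rightarrow> bool" where
  "sat x c = (case c of (a,b,s) \<Rightarrow> if s then inner a x < b else inner a x \<le> b)"

definition basic :: "('a::real_inner \<times> real \<times> bool) set \<Rightarrow> 'a set" where
  "basic K = {x. \<forall>c\<in>K. sat x c}"

definition semilin :: "'a::real_inner set \<Rightarrow> bool" where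
  "semilin S \<longleftrightarrow> (\<exists>F. finite F \<and> (\<forall>K\<in>F. finite K) \<and> S = \<Union>(basic ` F))"

lemma semilin_empty: "semilin {}"
  unfolding semilin_def by (rule exI[of _ "{}"]) auto

lemma semilin_basic: "finite K \<Longrightarrow> semilin (basic K)"
  unfolding semilin_def by (rule exI[of _ "{K}"]) auto

lemma basic_empty: "basic {} = UNIV" by (auto simp: basic_def)

lemma semilin_UNIV: "semilin (UNIV::'a::real_inner set)"
  using semilin_basic[of "{}::('a \<times> real \<times> bool) set"] by (simp add: basic_empty)

lemma semilin_Un: "semilin S \<Longrightarrow> semilin T \<Longrightarrow> semilin (S \<union> T)"
proof -
  assume "semilin S" "semilin T"
  then obtain F G where F: "finite F" "\<forall>K\<in>F. finite K" "S = \<Union>(basic ` F)"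
    and G: "finite G" "\<forall>K\<in>G. finite K" "T = \<Union>(basic ` G)"
    unfolding semilin_def by blast
  show ?thesis unfolding semilin_def
    by (rule exI[of _ "F \<union> G"]) (use F G in auto)
qed

lemma basic_Un: "basic (K \<union> L) = basic K \<inter> basic L"
  by (auto simp: basic_def)

lemma semilin_Int: "semilin S \<Longrightarrow> semilin T \<Longrightarrow> semilin (S \<inter> T)"
proof -
  assume "semilin S" "semilin T"
  then obtain F G where F: "finite F" "\<forall>K\<in>F. finite K" "S = \<Union>(basic ` F)"
    and G: "finite G" "\<forall>K\<in>G. finite K" "T = \<Union>(basic ` G)"
    unfolding semilin_def by blast
  let ?H = "(\<lambda>(K,L). K \<union> L) ` (F \<times> G)"
  have "S \<inter> T = \<Union>(basic ` ?H)"
    using F(3) G(3) by (auto simp: basic_Un)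
  moreover have "finite ?H" using F G by auto
  moreover have "\<forall>K\<in>?H. finite K" using F G by auto
  ultimately show ?thesis unfolding semilin_def by (intro exI[of _ ?H]) simp
qed

lemma semilin_Union: "finite \<F> \<Longrightarrow> (\<And>S. S \<in> \<F> \<Longrightarrow> semilin S) \<Longrightarrow> semilin (\<Union>\<F>)"
  by (induction \<F> rule: finite_induct) (auto intro: semilin_Un semilin_empty)

lemma semilin_Inter: "finite \<F> \<Longrightarrow> (\<And>S. S \<in> \<F> \<Longrightarrow> semilin S) \<Longrightarrow> semilin (\<Inter>\<F>)"
  by (induction \<F> rule: finite_induct) (auto intro: semilin_Int semilin_UNIV)

definition negc :: "('a::real_inner \<times> real \<times> bool) \<Rightarrow> ('a \<times> real \<times> bool)" where
  "negc c = (case c of (a,b,s) \<Rightarrow> (-a, -b, \<not> s))"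

lemma sat_negc: "sat x (negc c) \<longleftrightarrow> \<not> sat x c"
  by (cases c) (auto simp: sat_def negc_def inner_minus_left)

lemma Compl_basic: "- basic K = \<Union>((\<lambda>c. basic {negc c}) ` K)"
  by (auto simp: basic_def sat_negc)

lemma semilin_Compl: "semilin S \<Longrightarrow> semilin (- S)"
proof -
  assume "semilin S"
  then obtain F where F: "finite F" "\<forall>K\<in>F. finite K" "S = \<Union>(basic ` F)"
    unfolding semilin_def by blast
  have "- S = \<Inter>((\<lambda>K. - basic K) ` F)" using F(3) by auto
  moreover have "semilin (- basic K)" if "K \<in> F" for K
    unfolding Compl_basic using F(2) that
    by (intro semilin_Union) (auto intro: semilin_basic)
  ultimately show ?thesis using F(1) by (auto intro!: semilin_Inter)
qed

lemma semilin_Diff: "semilin S \<Longrightarrow> semilin T \<Longrightarrow> semilin (S - T)"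
  by (simp add: Diff_eq semilin_Compl semilin_Int)

lemma semilin_le: "semilin {x. inner a x \<le> b}"
proof -
  have "{x. inner a x \<le> b} = basic {(a,b,False)}" by (auto simp: basic_def sat_def)
  then show ?thesis by (simp add: semilin_basic)
qed

lemma semilin_lt: "semilin {x. inner a x < b}"
proof -
  have "{x. inner a x < b} = basic {(a,b,True)}" by (auto simp: basic_def sat_def)
  then show ?thesis by (simp add: semilin_basic)
qed

lemma semilin_vimage:
  assumes f: "\<And>a. \<exists>a' k. \<forall>x. inner a (f x) = inner a' x + k"
    and S: "semilin S"
  shows "semilin (f -` S)"
proof -
  obtain A B where AB: "\<And>a x. inner a (f x) = inner (A a) x + B a"
    using f by metis
  obtain F where F: "finite F" "\<forall>K\<in>F. finite K" "S = \<Union>(basic ` F)"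
    using S unfolding semilin_def by blast
  define tr where "tr = (\<lambda>(a,b,s). (A a, b - B a, s::bool))"
  have sat_tr: "sat (f x) c \<longleftrightarrow> sat x (tr c)" for x c
    by (cases c) (auto simp: sat_def tr_def AB)
  have "f -` basic K = basic (tr ` K)" for K
    by (auto simp: basic_def sat_tr)
  then have "f -` S = \<Union>(basic ` ((image tr) ` F))" using F(3) by auto
  then show ?thesis unfolding semilin_def using F by (intro exI[of _ "(image tr) ` F"]) simp
qed

definition wk :: "('a::real_inner \<times> real \<times> bool) \<Rightarrow> ('a \<times> real \<times> bool)" where
  "wk c = (case c of (a,b,s) \<Rightarrow> (a, b, False))"

lemma basic_wk: "basic (wk ` K) = (\<Inter>c\<in>K. {x. inner (fst c) x \<le> fst (snd c)})"
  unfolding basic_def wk_def sat_def by (auto simp: case_prod_beta)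

lemma sat_wk: "sat x c \<Longrightarrow> sat x (wk c)"
  by (cases c) (auto simp: sat_def wk_def split: if_splits)

lemma closure_basic:
  fixes K :: "('a::euclidean_space \<times> real \<times> bool) set"
  assumes ne: "basic K \<noteq> {}"
  shows "closure (basic K) = basic (wk ` K)"
proof
  have cl: "closed (basic (wk ` K))"
  proof -
    have "basic (wk ` K) = (\<Inter>c\<in>K. {x. inner (fst c) x \<le> fst (snd c)})"
      by (rule basic_wk)
    then show ?thesis by (auto intro!: closed_INT closed_halfspace_le)
  qed
  have "basic K \<subseteq> basic (wk ` K)"
    by (auto simp: basic_def sat_wk)
  then show "closure (basic K) \<subseteq> basic (wk ` K)" using cl by (rule closure_minimal)
next
  obtain p where p: "p \<in> basic K" using ne by blast
  show "basic (wk ` K) \<subseteq> closure (basic K)"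
  proof
    fix q assume q: "q \<in> basic (wk ` K)"
    show "q \<in> closure (basic K)"
    proof (cases "p = q")
      case True then show ?thesis using p closure_subset by blast
    next
      case False
      have "open_segment p q \<subseteq> basic K"
      proof
        fix z assume "z \<in> open_segment p q"
        then obtain u where u: "0 < u" "u < 1" "z = (1 - u) *\<^sub>R p + u *\<^sub>R q"
          by (auto simp: in_segment)
        show "z \<in> basic K" unfolding basic_def
        proof (intro CollectI ballI)
          fix c assume cK: "c \<in> K"
          obtain a b s where c: "c = (a,b,s)" by (cases c)
          have "sat p c" using p cK by (auto simp: basic_def)
          moreover have "sat q (wk c)" using q cK by (auto simp: basic_def)
          ultimately have h1: "if s then inner a p < b else inner a p \<le> b" and h2: "inner a q \<le> b"
            by (auto simp: sat_def wk_def c)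
          have ez: "inner a z = (1 - u) * inner a p + u * inner a q"
            by (simp add: u(3) inner_add_right)
          have m2: "u * inner a q \<le> u * b" using h2 u by (simp add: mult_left_mono)
          show "sat z c"
          proof (cases s)
            case True
            then have "(1 - u) * inner a p < (1 - u) * b" using h1 u by simp
            then show ?thesis using m2 ez True by (simp add: c sat_def algebra_simps)
          next
            case False
            then have "(1 - u) * inner a p \<le> (1 - u) * b" using h1 u by (simp add: mult_left_mono)
            then show ?thesis using m2 ez False by (simp add: c sat_def algebra_simps)
          qed
        qed
      qed
      then have "closure (open_segment p q) \<subseteq> closure (basic K)" by (rule closure_mono)
      then show ?thesis using False by auto
    qed
  qed
qed

lemma closure_UN_finite:
  fixes f :: "'b \<Rightarrow> 'a::topological_space set"
  shows "finite F \<Longrightarrow> closure (\<Union>(f ` F)) = \<Union>((\<lambda>K. closure (f K)) ` F)"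
  by (induction F rule: finite_induct) auto

lemma semilin_closure:
  fixes S :: "'a::euclidean_space set"
  assumes "semilin S" shows "semilin (closure S)"
proof -
  obtain F where F: "finite F" "\<forall>K\<in>F. finite K" "S = \<Union>(basic ` F)"
    using assms unfolding semilin_def by blast
  have "closure S = \<Union>((\<lambda>K. closure (basic K)) ` F)"
    using F by (simp add: closure_UN_finite)
  moreover have "semilin (closure (basic K))" if "K \<in> F" for K
  proof (cases "basic K = {}")
    case True then show ?thesis by (simp add: semilin_empty)
  next
    case False then show ?thesis using F(2) that by (simp add: closure_basic semilin_basic)
  qed
  ultimately show ?thesis using F(1) by (auto intro!: semilin_Union)
qed

lemma Defs_polyhedron_empty: "Defs.polyhedron {}"
  unfolding Defs.polyhedron_def by (rule exI[of _ "{}"]) auto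

lemma Defs_polyhedron_Un: "Defs.polyhedron S \<Longrightarrow> Defs.polyhedron T \<Longrightarrow> Defs.polyhedron (S \<union> T)"
proof -
  assume "Defs.polyhedron S" "Defs.polyhedron T"
  then obtain F G where F: "finite F" "\<forall>K\<in>F. finite K" "S = \<Union>((\<lambda>S. convex hull S) ` F)"
    and G: "finite G" "\<forall>K\<in>G. finite K" "T = \<Union>((\<lambda>S. convex hull S) ` G)"
    unfolding Defs.polyhedron_def by blast
  show ?thesis unfolding Defs.polyhedron_def
    by (rule exI[of _ "F \<union> G"]) (use F G in auto)
qed

lemma Defs_polyhedron_polytope: "polytope S \<Longrightarrow> Defs.polyhedron S"
proof -
  assume "polytope S"
  then obtain v where v: "finite v" "S = convex hull v" unfolding polytope_def by blast
  show ?thesis unfolding Defs.polyhedron_def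
    by (rule exI[of _ "{v}"]) (use v in auto)
qed

lemma Defs_polyhedron_Union: "finite \<F> \<Longrightarrow> (\<And>S. S \<in> \<F> \<Longrightarrow> Defs.polyhedron S) \<Longrightarrow> Defs.polyhedron (\<Union>\<F>)"
  by (induction \<F> rule: finite_induct) (simp_all add: Defs_polyhedron_Un Defs_polyhedron_empty)

lemma semilin_lib_polyhedron:
  fixes S :: "'a::euclidean_space set"
  assumes "Polytope.polyhedron S" shows "semilin S"
proof -
  obtain F where F: "finite F" "S = \<Inter>F" "\<forall>h\<in>F. \<exists>a b. a \<noteq> 0 \<and> h = {x. a \<bullet> x \<le> b}"
    using assms unfolding Polytope.polyhedron_def by blast
  show ?thesis using F by (auto intro!: semilin_Inter simp: semilin_le)
qed

lemma semilin_Defs_polyhedron: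
  fixes S :: "'a::euclidean_space set"
  assumes "Defs.polyhedron S" shows "semilin S"
proof -
  obtain F where F: "finite F" "\<forall>S\<in>F. finite S" "S = \<Union> ((\<lambda>S. convex hull S) ` F)"
    using assms unfolding Defs.polyhedron_def by blast
  show ?thesis unfolding F(3)
  proof (rule semilin_Union)
    show "finite ((\<lambda>S. convex hull S) ` F)" using F(1) by simp
  next
    fix T assume "T \<in> (\<lambda>S. convex hull S) ` F"
    then obtain V where "V \<in> F" "T = convex hull V" by blast
    then show "semilin T" using F(2)
      by (simp add: semilin_lib_polyhedron polytope_imp_polyhedron polytope_convex_hull)
  qed
qed

lemma compact_semilin_polyhedron:
  fixes S :: "'a::euclidean_space set"
  assumes "semilin S" "compact S" shows "Defs.polyhedron S"
proof -
  obtain F where F: "finite F" "\<forall>K\<in>F. finite K" "S = \<Union>(basic ` F)"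
    using assms unfolding semilin_def by blast
  have "S = closure S" using assms(2) by (simp add: compact_imp_closed)
  also have "\<dots> = \<Union>((\<lambda>K. closure (basic K)) ` F)"
    using F by (simp add: closure_UN_finite)
  finally have SU: "S = \<Union>((\<lambda>K. closure (basic K)) ` F)" .
  have "Defs.polyhedron (closure (basic K))" if "K \<in> F" for K
  proof (cases "basic K = {}")
    case True then show ?thesis by (simp add: Defs_polyhedron_empty)
  next
    case False
    have eq: "closure (basic K) = basic (wk ` K)" using False by (rule closure_basic)
    have "basic (wk ` K) = (\<Inter>c\<in>K. {x. inner (fst c) x \<le> fst (snd c)})"
      by (rule basic_wk)
    then have "Polytope.polyhedron (basic (wk ` K))"
      using F(2) that by (auto intro!: polyhedron_Inter polyhedron_halfspace_le)
    moreover have "bounded (closure (basic K))"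
      using SU that compact_imp_bounded[OF assms(2)] by (metis UN_upper bounded_subset)
    ultimately show ?thesis using eq
      by (simp add: Defs_polyhedron_polytope polytope_eq_bounded_polyhedron)
  qed
  then show ?thesis using F(1) SU by (auto intro!: Defs_polyhedron_Union)
qed



definition phi :: "real \<Rightarrow> real" where "phi t = \<bar>\<bar>4*t - 2\<bar> - 1\<bar>"
definition gmap :: "real^'n \<Rightarrow> real^'n" where "gmap x = (\<chi> i. phi (x$i))"
definition cc :: "nat \<Rightarrow> real" where "cc k = (if even k then -4 else 4)"
definition dd :: "nat \<Rightarrow> real" where
  "dd k = (if k=0 then 1 else if k=1 then -1 else if k=2 then 3 else -3)"
definition inI :: "nat \<Rightarrow> real \<Rightarrow> bool" where
  "inI k t = (if k=0 then t \<le> 1/4 else if k=1 then 1/4 \<le> t \<and> t \<le> 1/2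
     else if k=2 then 1/2 \<le> t \<and> t \<le> 3/4 else 3/4 \<le> t)"
definition pick :: "real \<Rightarrow> nat" where
  "pick t = (if t \<le> 1/4 then 0 else if t \<le> 1/2 then 1 else if t \<le> 3/4 then 2 else 3)"

lemma four_cases: "(k::nat) < 4 \<Longrightarrow> k = 0 \<or> k = 1 \<or> k = 2 \<or> k = 3" by auto

lemma phi_piece: "k < 4 \<Longrightarrow> inI k t \<Longrightarrow> phi t = cc k * t + dd k"
  by (drule four_cases) (auto simp: phi_def cc_def dd_def inI_def abs_if)

lemma pick_lt: "pick t < 4" by (simp add: pick_def)
lemma inI_pick: "inI (pick t) t" by (simp add: pick_def inI_def)
lemma cc_nz: "cc k \<noteq> 0" by (simp add: cc_def)

definition Lp :: "('n \<Rightarrow> nat) \<Rightarrow> real^'n \<Rightarrow> real^'n" where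
  "Lp p x = (\<chi> i. cc (p i) * x$i + dd (p i))"
definition Mp :: "('n \<Rightarrow> nat) \<Rightarrow> real^'n \<Rightarrow> real^'n" where
  "Mp p y = (\<chi> i. (y$i - dd (p i)) / cc (p i))"
definition Reg :: "('n \<Rightarrow> nat) \<Rightarrow> (real^'n) set" where
  "Reg p = {x. \<forall>i. inI (p i) (x$i)}"
definition PP :: "('n::finite \<Rightarrow> nat) set" where "PP = {p. \<forall>i. p i < 4}"

lemma finite_PP: "finite PP"
proof -
  have "PP \<subseteq> PiE UNIV (\<lambda>_. {..<4})" by (auto simp: PP_def PiE_iff)
  then show ?thesis by (rule finite_subset) (auto intro: finite_PiE)
qed

lemma MpLp: "Mp p (Lp p x) = x" by (simp add: Mp_def Lp_def vec_eq_iff cc_nz)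
lemma LpMp: "Lp p (Mp p y) = y" by (simp add: Mp_def Lp_def vec_eq_iff cc_nz)

lemma g_Reg: "p \<in> PP \<Longrightarrow> x \<in> Reg p \<Longrightarrow> gmap x = Lp p x"
  by (auto simp: gmap_def Lp_def Reg_def PP_def vec_eq_iff phi_piece)

lemma pick_Reg: "(\<lambda>i. pick (x$i)) \<in> PP" "x \<in> Reg (\<lambda>i. pick (x$i))"
  by (auto simp: PP_def Reg_def pick_lt inI_pick)

lemma Lp_aff: "\<exists>a' k. \<forall>x. inner a (Lp p x) = inner a' x + k"
proof (intro exI allI)
  fix x
  show "inner a (Lp p x) = inner (\<chi> i. a$i * cc (p i)) x + (\<Sum>i\<in>UNIV. a$i * dd (p i))"
    by (simp add: inner_vec_def Lp_def sum.distrib[symmetric] algebra_simps)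
qed

lemma Mp_aff: "\<exists>a' k. \<forall>x. inner a (Mp p x) = inner a' x + k"
proof (intro exI allI)
  fix x
  show "inner a (Mp p x) = inner (\<chi> i. a$i / cc (p i)) x + (\<Sum>i\<in>UNIV. - a$i * dd (p i) / cc (p i))"
    by (simp add: inner_vec_def Mp_def sum.distrib[symmetric] diff_divide_distrib algebra_simps)
qed

lemma semilin_coord_le: "semilin {x::real^'n. x$i \<le> c}"
proof -
  have "{x::real^'n. x$i \<le> c} = {x. inner (axis i 1) x \<le> c}"
    by (simp add: inner_commute[of "axis i 1"] inner_axis)
  then show ?thesis by (metis semilin_le)
qed

lemma semilin_coord_ge: "semilin {x::real^'n. c \<le> x$i}"
proof -
  have "{x::real^'n. c \<le> x$i} = {x. inner (- axis i 1) x \<le> - c}"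
    by (simp add: inner_commute[of "axis i 1"] inner_axis)
  then show ?thesis by (metis semilin_le)
qed

lemma semilin_coord_lt: "semilin {x::real^'n. x$i < c}"
proof -
  have "{x::real^'n. x$i < c} = - {x. c \<le> x$i}" by auto
  then show ?thesis by (simp add: semilin_Compl semilin_coord_ge)
qed

lemma semilin_coord_gt: "semilin {x::real^'n. c < x$i}"
proof -
  have "{x::real^'n. c < x$i} = - {x. x$i \<le> c}" by auto
  then show ?thesis by (simp add: semilin_Compl semilin_coord_le)
qed

lemma semilin_if: "semilin A \<Longrightarrow> semilin B \<Longrightarrow> semilin (if P then A else B)" by simp
lemmas semilin_if_eq = refl

lemma semilin_Reg: "semilin (Reg (p::'n::finite \<Rightarrow> nat))"
proof -
  have "Reg p = \<Inter>(range (\<lambda>i. {x::real^'n. inI (p i) (x$i)}))"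
    by (auto simp: Reg_def)
  moreover have "semilin {x::real^'n. inI k (x$i)}" for k and i::'n
  proof -
    have "{x::real^'n. inI k (x$i)} =
      (if k=0 then {x. x$i \<le> 1/4} else if k=1 then {x. 1/4 \<le> x$i} \<inter> {x. x$i \<le> 1/2}
       else if k=2 then {x. 1/2 \<le> x$i} \<inter> {x. x$i \<le> 3/4} else {x. 3/4 \<le> x$i})"
      by (auto simp: inI_def)
    then show ?thesis unfolding semilin_if_eq
      by (simp only:) (intro semilin_if semilin_Int semilin_coord_le semilin_coord_ge)
  qed
  ultimately show ?thesis by (auto intro!: semilin_Inter)
qed

lemma image_g: "gmap ` S = (\<Union>p\<in>PP. Mp p -` (S \<inter> Reg p))"
proof
  show "gmap ` S \<subseteq> (\<Union>p\<in>PP. Mp p -` (S \<inter> Reg p))"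
  proof
    fix y assume "y \<in> gmap ` S"
    then obtain x where x: "x \<in> S" "y = gmap x" by blast
    let ?p = "\<lambda>i. pick (x$i)"
    have "y = Lp ?p x" using x g_Reg pick_Reg by metis
    then have "Mp ?p y = x" by (simp add: MpLp)
    then show "y \<in> (\<Union>p\<in>PP. Mp p -` (S \<inter> Reg p))" using x pick_Reg by blast
  qed
next
  show "(\<Union>p\<in>PP. Mp p -` (S \<inter> Reg p)) \<subseteq> gmap ` S"
  proof
    fix y assume "y \<in> (\<Union>p\<in>PP. Mp p -` (S \<inter> Reg p))"
    then obtain p where p: "p \<in> PP" "Mp p y \<in> S" "Mp p y \<in> Reg p" by blast
    then have "gmap (Mp p y) = y" using g_Reg LpMp by metis
    then show "y \<in> gmap ` S" using p by (metis imageI)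
  qed
qed

lemma vimage_g: "gmap -` S = (\<Union>p\<in>PP. Reg p \<inter> Lp p -` S)"
proof
  show "gmap -` S \<subseteq> (\<Union>p\<in>PP. Reg p \<inter> Lp p -` S)"
  proof
    fix x assume "x \<in> gmap -` S"
    moreover have "gmap x = Lp (\<lambda>i. pick (x$i)) x" using g_Reg pick_Reg by metis
    ultimately show "x \<in> (\<Union>p\<in>PP. Reg p \<inter> Lp p -` S)" using pick_Reg by fastforce
  qed
next
  show "(\<Union>p\<in>PP. Reg p \<inter> Lp p -` S) \<subseteq> gmap -` S"
    using g_Reg by fastforce
qed

lemma semilin_image_g: "semilin S \<Longrightarrow> semilin (gmap ` S)"
  unfolding image_g using finite_PP
  by (auto intro!: semilin_Union semilin_vimage Mp_aff semilin_Int semilin_Reg)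

lemma semilin_vimage_g: "semilin S \<Longrightarrow> semilin (gmap -` S)"
  unfolding vimage_g using finite_PP
  by (auto intro!: semilin_Union semilin_vimage Lp_aff semilin_Int semilin_Reg)



lemma phi_local:
  assumes "0 \<le> t" "t \<le> 1"
  shows "\<exists>s'. phi s' = t \<and> \<bar>s' - s\<bar> = \<bar>t - phi s\<bar> / 4"
proof -
  consider "s \<le> 1/4" | "1/4 < s" "s \<le> 1/2" | "1/2 < s" "s \<le> 3/4" | "3/4 < s" by linarith
  then show ?thesis
  proof cases
    case 1 show ?thesis
      by (rule exI[of _ "(1 - t)/4"]) (use 1 assms in \<open>auto simp: phi_def abs_if field_simps\<close>)
  next
    case 2 show ?thesis
      by (rule exI[of _ "(1 + t)/4"]) (use 2 assms in \<open>auto simp: phi_def abs_if field_simps\<close>)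
  next
    case 3 show ?thesis
      by (rule exI[of _ "(3 - t)/4"]) (use 3 assms in \<open>auto simp: phi_def abs_if field_simps\<close>)
  next
    case 4 show ?thesis
      by (rule exI[of _ "(3 + t)/4"]) (use 4 assms in \<open>auto simp: phi_def abs_if field_simps\<close>)
  qed
qed

lemma phi_range: "0 < t \<Longrightarrow> t < 1 \<Longrightarrow> 0 \<le> phi t \<and> phi t \<le> 1"
  by (auto simp: phi_def abs_if)

lemma g_box_sub: "gmap ` open_unit_cube \<subseteq> (unit_cube :: (real^'n) set)"
  by (auto simp: mem_box_cart gmap_def phi_range)

lemma phi_inv: "0 \<le> t \<Longrightarrow> t \<le> 1 \<Longrightarrow> phi ((3 - t)/4) = t"
proof -
  assume "0 \<le> t" "t \<le> 1"
  moreover have e: "4 * ((3 - t)/4) - 2 = 1 - t" by simp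
  ultimately show ?thesis unfolding phi_def e by simp
qed

lemma g_box: "gmap ` open_unit_cube = (unit_cube :: (real^'n) set)"
proof (rule equalityI)
  show "gmap ` open_unit_cube \<subseteq> (unit_cube :: (real^'n) set)" by (rule g_box_sub)
  show "(unit_cube :: (real^'n) set) \<subseteq> gmap ` open_unit_cube"
  proof
    fix y :: "real^'n" assume y: "y \<in> unit_cube"
    define x :: "real^'n" where "x = (\<chi> i. (3 - y$i)/4)"
    have yi: "\<And>i. 0 \<le> y$i" "\<And>i. y$i \<le> 1" using y by (simp_all add: mem_box_cart)
    have "0 < (3 - y$i)/4 \<and> (3 - y$i)/4 < 1" for i using yi(1)[of i] yi(2)[of i] by simp
    then have "x \<in> open_unit_cube" by (simp add: mem_box_cart x_def)
    moreover have "gmap x = y" using yi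
      by (simp add: x_def gmap_def vec_eq_iff phi_inv)
    ultimately show "y \<in> gmap ` open_unit_cube" by blast
  qed
qed

lemma g_cont: "continuous_on UNIV gmap"
  unfolding gmap_def phi_def by (intro continuous_intros)

lemma g_open:
  fixes U :: "(real^'n) set"
  assumes "open U"
  shows "openin (top_of_set unit_cube) (gmap ` U \<inter> unit_cube)"
  unfolding openin_euclidean_subtopology_iff
proof (intro conjI ballI)
  fix y assume "y \<in> gmap ` U \<inter> unit_cube"
  then obtain x where x: "x \<in> U" "y = gmap x" by blast
  obtain d where d: "d > 0" "ball x d \<subseteq> U" using assms x(1) open_contains_ball by blast
  define e where "e = d / real CARD('n)"
  have e: "e > 0" using d by (simp add: e_def)
  show "\<exists>e>0. \<forall>y'\<in>unit_cube. dist y' y < e \<longrightarrow> y' \<in> gmap ` U \<inter> unit_cube"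
  proof (intro exI[of _ e] conjI e ballI impI)
    fix y' :: "real^'n" assume y': "y' \<in> unit_cube" "dist y' y < e"
    have "\<forall>i. \<exists>s'. phi s' = y'$i \<and> \<bar>s' - x$i\<bar> = \<bar>y'$i - phi (x$i)\<bar> / 4"
    proof
      fix i
      have "0 \<le> y'$i" "y'$i \<le> 1" using y'(1) by (simp_all add: mem_box_cart)
      then show "\<exists>s'. phi s' = y'$i \<and> \<bar>s' - x$i\<bar> = \<bar>y'$i - phi (x$i)\<bar> / 4"
        by (rule phi_local)
    qed
    then obtain S where S: "\<And>i. phi (S i) = y'$i \<and> \<bar>S i - x$i\<bar> = \<bar>y'$i - phi (x$i)\<bar> / 4"
      by metis
    define x' :: "real^'n" where "x' = (\<chi> i. S i)"
    have gx': "gmap x' = y'" using S by (simp add: gmap_def x'_def vec_eq_iff)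
    have comp: "\<bar>(x' - x)$i\<bar> \<le> e / 4" for i
    proof -
      have "\<bar>y'$i - phi (x$i)\<bar> = \<bar>(y' - y)$i\<bar>" by (simp add: x(2) gmap_def)
      also have "\<dots> \<le> norm (y' - y)" by (rule component_le_norm_cart)
      also have "\<dots> < e" using y'(2) by (simp add: dist_norm)
      finally show ?thesis using S[of i] by (simp add: x'_def)
    qed
    have "dist x' x = norm (x' - x)" by (simp add: dist_norm)
    also have "\<dots> \<le> (\<Sum>i\<in>UNIV. \<bar>(x' - x)$i\<bar>)" by (rule norm_le_l1_cart)
    also have "\<dots> \<le> real CARD('n) * (e / 4)"
      using sum_bounded_above[of UNIV "\<lambda>i. \<bar>(x' - x)$i\<bar>" "e/4"] comp by simp
    also have "\<dots> < d" using d e by (simp add: e_def)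
    finally have "x' \<in> U" using d(2) by (auto simp: dist_commute)
    then show "y' \<in> gmap ` U \<inter> unit_cube" using gx' y'(1) by blast
  qed
qed auto

lemma Defs_polyhedron_compact: "Defs.polyhedron (R::'a::euclidean_space set) \<Longrightarrow> compact R"
  unfolding Defs.polyhedron_def
  by (auto intro: finite_imp_compact_convex_hull)

lemma semilin_box: "semilin (open_unit_cube :: (real^'n) set)"
proof -
  have "(open_unit_cube :: (real^'n) set) = (\<Inter>i. {x. 0 < x$i} \<inter> {x. x$i < 1})"
    by (auto simp: mem_box_cart)
  then show ?thesis by (auto intro!: semilin_Inter semilin_Int semilin_coord_gt semilin_coord_lt)
qed

lemma semilin_cube: "semilin (unit_cube :: (real^'n) set)"
proof -
  have "(unit_cube :: (real^'n) set) = (\<Inter>i. {x. 0 \<le> x$i} \<inter> {x. x$i \<le> 1})"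
    by (auto simp: mem_box_cart)
  then show ?thesis by (auto intro!: semilin_Inter semilin_Int semilin_coord_ge semilin_coord_le)
qed

lemma box_ne: "(open_unit_cube :: (real^'n) set) \<noteq> {}"
proof -
  have "(\<chi> i. 1/2) \<in> (open_unit_cube :: (real^'n) set)" by (simp add: mem_box_cart)
  then show ?thesis by blast
qed



theorem lemma5p7:
  shows "\<exists>g :: real^'n \<Rightarrow> real^'n.
           g ` open_unit_cube = unit_cube \<and> polyhedral_map g \<and> open_polyhedral_map g"
proof (intro exI[of _ gmap] conjI)
  show "gmap ` open_unit_cube = (unit_cube :: (real^'n) set)" by (rule g_box)
next
  show "polyhedral_map (gmap :: real^'n \<Rightarrow> real^'n)"
    unfolding polyhedral_map_def
  proof
    fix V :: "(real^'n) set" assume "V \<in> Sub_o unit_cube"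
    then obtain R where R: "V = unit_cube - R" "R \<subseteq> unit_cube" "Defs.polyhedron R"
      unfolding Sub_o_def by blast
    define R2 where "R2 = closure (open_unit_cube \<inter> gmap -` R)"
    have ic: "\<And>x. isCont gmap x" using g_cont continuous_on_eq_continuous_at open_UNIV by blast
    have clR: "closed (gmap -` R)"
      by (intro continuous_closed_vimage compact_imp_closed[OF Defs_polyhedron_compact[OF R(3)]] ic)
    have R2box: "R2 \<inter> open_unit_cube = open_unit_cube \<inter> gmap -` R"
    proof -
      have s1: "R2 \<subseteq> gmap -` R" unfolding R2_def using clR
        by (simp add: closure_minimal)
      have s2: "open_unit_cube \<inter> gmap -` R \<subseteq> R2" unfolding R2_def by (rule closure_subset)
      show ?thesis
      proof
        show "R2 \<inter> open_unit_cube \<subseteq> open_unit_cube \<inter> gmap -` R" using s1 by auto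
        show "open_unit_cube \<inter> gmap -` R \<subseteq> R2 \<inter> open_unit_cube" using s2 by auto
      qed
    qed
    have R2sub: "R2 \<subseteq> unit_cube"
    proof -
      have "R2 \<subseteq> closure open_unit_cube" unfolding R2_def by (rule closure_mono) (rule Int_lower1)
      then show ?thesis by (metis closure_box[OF box_ne])
    qed
    have "semilin R2" unfolding R2_def
      by (rule semilin_closure, rule semilin_Int, rule semilin_box, rule semilin_vimage_g,
          rule semilin_Defs_polyhedron, rule R(3))
    moreover have "compact R2"
    proof -
      have "bounded R2" using R2sub bounded_cbox bounded_subset by blast
      moreover have "closed R2" unfolding R2_def by (rule closed_closure)
      ultimately show ?thesis by (simp add: compact_eq_bounded_closed)
    qed
    ultimately have pR2: "Defs.polyhedron R2" by (rule compact_semilin_polyhedron)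
    have "{x \<in> open_unit_cube. gmap x \<in> V} = (unit_cube - R2) \<inter> open_unit_cube"
    proof (rule set_eqI)
      fix x :: "real^'n"
      show "x \<in> {x \<in> open_unit_cube. gmap x \<in> V} \<longleftrightarrow> x \<in> (unit_cube - R2) \<inter> open_unit_cube"
      proof (cases "x \<in> open_unit_cube")
        case True
        have "x \<in> unit_cube" using box_subset_cbox[of 0 1] True by (rule subsetD)
        moreover have "gmap x \<in> unit_cube" using True g_box_sub by (metis imageI subsetD)
        moreover have "x \<in> R2 \<longleftrightarrow> gmap x \<in> R"
        proof -
          have "x \<in> R2 \<longleftrightarrow> x \<in> R2 \<inter> open_unit_cube" using True by (simp only: Int_iff simp_thms)
          also have "\<dots> \<longleftrightarrow> x \<in> open_unit_cube \<inter> gmap -` R" by (simp only: R2box)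
          also have "\<dots> \<longleftrightarrow> gmap x \<in> R" using True by (simp only: Int_iff vimage_eq simp_thms)
          finally show ?thesis .
        qed
        ultimately show ?thesis using True unfolding R(1)
          by (simp only: mem_Collect_eq Int_iff Diff_iff simp_thms)
      next
        case False then show ?thesis by (simp only: mem_Collect_eq Int_iff simp_thms)
      qed
    qed
    moreover have "unit_cube - R2 \<in> Sub_o unit_cube"
      unfolding Sub_o_def using R2sub pR2 by (intro CollectI exI[of _ R2]) simp
    ultimately show "{x \<in> open_unit_cube. gmap x \<in> V} \<in> Sub_o_open_cube"
      unfolding Sub_o_open_cube_def by (intro CollectI exI[of _ "unit_cube - R2"]) simp
  qed
next
  show "open_polyhedral_map (gmap :: real^'n \<Rightarrow> real^'n)"
    unfolding open_polyhedral_map_def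
  proof
    fix U :: "(real^'n) set" assume "U \<in> Sub_o_open_cube"
    then obtain R where R: "U = (unit_cube - R) \<inter> open_unit_cube" "R \<subseteq> unit_cube" "Defs.polyhedron R"
      unfolding Sub_o_open_cube_def Sub_o_def by blast
    have Ubox: "U \<subseteq> open_unit_cube" using R(1) by blast
    have Ueq: "U = open_unit_cube - R" using R(1) box_subset_cbox[of 0 1] by blast
    have "open U" unfolding Ueq
      using Defs_polyhedron_compact[OF R(3)] by (intro open_Diff open_box compact_imp_closed)
    have gU: "gmap ` U \<subseteq> unit_cube" using Ubox g_box_sub by blast
    define R' where "R' = unit_cube - gmap ` U"
    have "openin (top_of_set unit_cube) (gmap ` U)"
      using g_open[OF \<open>open U\<close>] gU by (simp add: Int_absorb2)
    then have "closedin (top_of_set unit_cube) R'"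
      unfolding R'_def by (simp add: closedin_diff closedin_topspace)
    then have "closed R'" using closedin_closed_trans closed_cbox by blast
    moreover have "R' \<subseteq> unit_cube" by (simp add: R'_def)
    ultimately have "compact R'"
      by (simp add: compact_eq_bounded_closed bounded_subset[OF bounded_cbox])
    moreover have "semilin R'" unfolding R'_def
      using Ueq by (simp add: semilin_Diff semilin_cube semilin_image_g semilin_box semilin_Defs_polyhedron R(3))
    ultimately have "Defs.polyhedron R'" by (simp add: compact_semilin_polyhedron)
    moreover have "gmap ` U = unit_cube - R'" using gU by (auto simp: R'_def)
    moreover have "R' \<subseteq> unit_cube" by (simp add: R'_def)
    ultimately show "gmap ` U \<in> Sub_o unit_cube"
      unfolding Sub_o_def by (intro CollectI exI[of _ R']) simp
  qed
qed

end
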